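(* Let $\alpha\in(0,1]$ and let $\{Z_i\}$ be an i.i.d. sequence of $\mathbb{R}^d$-valued random variables on a sublinear expectation space $(\Omega,\mathcal{H},\hat{\mathbb{E}})$ with $S_n=\sum_{i=1}^nZ_i$, and assume there is $0<\delta<\alpha$ with $M_\delta:=\sup_n\hat{\mathbb{E}}[|n^{-1/\alpha}S_n|^\delta]<\infty$. For $\phi\in C_{b,Lip}(\mathbb{R}^d)$ let $\hat{\mathbb{F}}[\phi]:=\sup_n\hat{\mathbb{E}}[\phi(S_n/\sqrt[\alpha]{n})]$. Then $\hat{\mathbb{F}}$ is a tight sublinear expectation on $(\mathbb{R}^d,C_{b,Lip}(\mathbb{R}^d))$.
   Context: Sublinear expectation: a functional that is monotone, constant preserving, sub-additive and positively homogeneous; random variables need only satisfy $\varphi(X)\in\mathcal{H}$ for bounded Lipschitz $\varphi$. I.i.d. means each $Z_{i+1}$ has the same distribution as $Z_i$ and is independent from $(Z_1,\dots,Z_i)$ in the sublinear sense ($\hat{\mathbb{E}}[\varphi(X,Y)]=\hat{\mathbb{E}}[\hat{\mathbb{E}}[\varphi(x,Y)]_{x=X}]$). A sublinear expectation $\mathbb{E}$ on $(\mathbb{R}^n,C_{b,Lip}(\mathbb{R}^n))$ is tight if for each $\varepsilon>0$ there exist $N>0$ and $\varphi\in C_{b,Lip}(\mathbb{R}^n)$ with $\mathbb{1}_{\{|x|\ge N\}}\le\varphi$ and $\mathbb{E}[\varphi]<\varepsilon$. *)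

theory Defs
  imports "HOL-Analysis.Analysis"
begin

definition sublinear_expectation :: "('w \<Rightarrow> real) set \<Rightarrow> (('w \<Rightarrow> real) \<Rightarrow> real) \<Rightarrow> bool" where
  "sublinear_expectation H E \<longleftrightarrow>
     (\<forall>c. (\<lambda>_. c) \<in> H) \<and>
     (\<forall>X\<in>H. \<forall>Y\<in>H. (\<lambda>w. X w + Y w) \<in> H) \<and>
     (\<forall>X\<in>H. \<forall>c. (\<lambda>w. c * X w) \<in> H) \<and>
     (\<forall>X\<in>H. (\<lambda>w. \<bar>X w\<bar>) \<in> H) \<and>
     (\<forall>X\<in>H. \<forall>Y\<in>H. (\<forall>w. X w \<le> Y w) \<longrightarrow> E X \<le> E Y) \<and>
     (\<forall>c. E (\<lambda>_. c) = c) \<and>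
     (\<forall>X\<in>H. \<forall>Y\<in>H. E (\<lambda>w. X w + Y w) \<le> E X + E Y) \<and>
     (\<forall>X\<in>H. \<forall>c\<ge>0. E (\<lambda>w. c * X w) = c * E X)"

definition bounded_lip :: "('a::metric_space \<Rightarrow> real) \<Rightarrow> bool" where
  "bounded_lip \<phi> \<longleftrightarrow> bounded (range \<phi>) \<and> (\<exists>L. \<forall>x y. \<bar>\<phi> x - \<phi> y\<bar> \<le> L * dist x y)"

text \<open>C_{b,Lip}(R^{d k}): functions of a tuple (x_0,...,x_{k-1}) of R^d vectors, encoded as
  a function on nat => R^d that is bounded and Lipschitz w.r.t. the Euclidean norm of the
  first k components (hence depends only on them).\<close>
definition bounded_lip_tuple :: "nat \<Rightarrow> ((nat \<Rightarrow> real^'d) \<Rightarrow> real) \<Rightarrow> bool" where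
  "bounded_lip_tuple k \<phi> \<longleftrightarrow> bounded (range \<phi>) \<and>
     (\<exists>L. \<forall>x y. \<bar>\<phi> x - \<phi> y\<bar> \<le> L * sqrt (\<Sum>j<k. (norm (x j - y j))^2))"

definition random_seq :: "('w \<Rightarrow> real) set \<Rightarrow> (nat \<Rightarrow> 'w \<Rightarrow> real^'d) \<Rightarrow> bool" where
  "random_seq H Z \<longleftrightarrow> (\<forall>k \<phi>. bounded_lip_tuple k \<phi> \<longrightarrow> (\<lambda>w. \<phi> (\<lambda>j. Z j w)) \<in> H)"

text \<open>i.i.d. in the sublinear sense: Z_{k+1} identically distributed as Z_k, and Z_k independent
  from (Z_0,...,Z_{k-1}) (0-based indexing).\<close>
definition iid_seq :: "(('w \<Rightarrow> real) \<Rightarrow> real) \<Rightarrow> (nat \<Rightarrow> 'w \<Rightarrow> real^'d) \<Rightarrow> bool" where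
  "iid_seq E Z \<longleftrightarrow>
     (\<forall>i \<phi>. bounded_lip \<phi> \<longrightarrow> E (\<lambda>w. \<phi> (Z (Suc i) w)) = E (\<lambda>w. \<phi> (Z i w))) \<and>
     (\<forall>k \<phi>. bounded_lip_tuple (Suc k) \<phi> \<longrightarrow>
        E (\<lambda>w. \<phi> (\<lambda>j. Z j w)) = E (\<lambda>w. E (\<lambda>w'. \<phi> ((\<lambda>j. Z j w)(k := Z k w')))))"

definition scaled_sum :: "real \<Rightarrow> (nat \<Rightarrow> 'w \<Rightarrow> real^'d) \<Rightarrow> nat \<Rightarrow> 'w \<Rightarrow> real^'d" where
  "scaled_sum \<alpha> Z n w = (1 / (real n powr (1 / \<alpha>))) *\<^sub>R (\<Sum>i<n. Z i w)"

definition tight :: "((real^'d \<Rightarrow> real) \<Rightarrow> real) \<Rightarrow> bool" where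
  "tight F \<longleftrightarrow> (\<forall>\<epsilon>>0. \<exists>N>0. \<exists>\<phi>. bounded_lip \<phi> \<and>
       (\<forall>x. (if norm x \<ge> N then 1 else 0) \<le> \<phi> x) \<and> F \<phi> < \<epsilon>)"

end

theory Submission
  imports Defs
begin

lemma sum_norm_le_sqrt:
  fixes x y :: "nat \<Rightarrow> real^'d"
  shows "norm (\<Sum>i<n. x i - y i) \<le> real n * sqrt (\<Sum>j<n. (norm (x j - y j))^2)"
proof -
  have "norm (\<Sum>i<n. x i - y i) \<le> (\<Sum>i<n. norm (x i - y i))" by (rule norm_sum)
  also have "\<dots> \<le> (\<Sum>i<n. sqrt (\<Sum>j<n. (norm (x j - y j))^2))"
  proof (rule sum_mono)
    fix i assume "i \<in> {..<n}"
    have "(norm (x i - y i))^2 \<le> (\<Sum>j<n. (norm (x j - y j))^2)"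
      using \<open>i \<in> {..<n}\<close> by (intro member_le_sum) auto
    then have "sqrt ((norm (x i - y i))^2) \<le> sqrt (\<Sum>j<n. (norm (x j - y j))^2)"
      using real_sqrt_le_mono by blast
    then show "norm (x i - y i) \<le> sqrt (\<Sum>j<n. (norm (x j - y j))^2)" by simp
  qed
  also have "\<dots> = real n * sqrt (\<Sum>j<n. (norm (x j - y j))^2)" by simp
  finally show ?thesis .
qed

lemma comp_in_H:
  fixes Z :: "nat \<Rightarrow> 'w \<Rightarrow> real^'d"
  assumes "random_seq H Z" and "bounded_lip \<phi>"
  shows "(\<lambda>w. \<phi> (scaled_sum \<alpha> Z n w)) \<in> H"
proof -
  define c where "c = 1 / (real n powr (1 / \<alpha>))"
  define \<psi> where "\<psi> = (\<lambda>x::nat \<Rightarrow> real^'d. \<phi> (c *\<^sub>R (\<Sum>i<n. x i)))"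
  from assms(2) obtain L where L: "\<forall>x y. \<bar>\<phi> x - \<phi> y\<bar> \<le> L * dist x y"
    and b: "bounded (range \<phi>)" unfolding bounded_lip_def by blast
  have "bounded_lip_tuple n \<psi>"
    unfolding bounded_lip_tuple_def
  proof
    show "bounded (range \<psi>)"
      by (rule bounded_subset[OF b]) (auto simp: \<psi>_def)
    show "\<exists>L. \<forall>x y. \<bar>\<psi> x - \<psi> y\<bar> \<le> L * sqrt (\<Sum>j<n. (norm (x j - y j))^2)"
    proof (intro exI allI)
      fix x y :: "nat \<Rightarrow> real^'d"
      have "\<bar>\<psi> x - \<psi> y\<bar> \<le> L * dist (c *\<^sub>R (\<Sum>i<n. x i)) (c *\<^sub>R (\<Sum>i<n. y i))"
        using L by (simp add: \<psi>_def)
      also have "\<dots> \<le> max L 0 * dist (c *\<^sub>R (\<Sum>i<n. x i)) (c *\<^sub>R (\<Sum>i<n. y i))"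
        by (intro mult_right_mono) auto
      also have "dist (c *\<^sub>R (\<Sum>i<n. x i)) (c *\<^sub>R (\<Sum>i<n. y i)) = \<bar>c\<bar> * norm (\<Sum>i<n. x i - y i)"
        by (simp add: dist_norm sum_subtractf scaleR_diff_right[symmetric])
      also have "max L 0 * (\<bar>c\<bar> * norm (\<Sum>i<n. x i - y i)) \<le>
          max L 0 * (\<bar>c\<bar> * (real n * sqrt (\<Sum>j<n. (norm (x j - y j))^2)))"
        by (intro mult_left_mono sum_norm_le_sqrt) auto
      finally show "\<bar>\<psi> x - \<psi> y\<bar> \<le> (max L 0 * \<bar>c\<bar> * real n) * sqrt (\<Sum>j<n. (norm (x j - y j))^2)"
        by (simp add: mult_ac)
    qed
  qed
  then have "(\<lambda>w. \<psi> (\<lambda>j. Z j w)) \<in> H" using assms(1) unfolding random_seq_def by blast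
  moreover have "(\<lambda>w. \<psi> (\<lambda>j. Z j w)) = (\<lambda>w. \<phi> (scaled_sum \<alpha> Z n w))"
    by (simp add: \<psi>_def c_def scaled_sum_def)
  ultimately show ?thesis by simp
qed


lemma bl_bound:
  assumes "bounded_lip \<phi>" obtains B where "\<forall>x. \<bar>\<phi> x\<bar> \<le> B"
  using assms unfolding bounded_lip_def bounded_iff by auto

lemma bl_add: "bounded_lip \<phi> \<Longrightarrow> bounded_lip \<psi> \<Longrightarrow> bounded_lip (\<lambda>x. \<phi> x + \<psi> x)"
proof -
  assume a: "bounded_lip \<phi>" "bounded_lip \<psi>"
  obtain B1 where B1: "\<forall>x. \<bar>\<phi> x\<bar> \<le> B1" using a(1) by (rule bl_bound)
  obtain B2 where B2: "\<forall>x. \<bar>\<psi> x\<bar> \<le> B2" using a(2) by (rule bl_bound)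
  obtain L1 where L1: "\<forall>x y. \<bar>\<phi> x - \<phi> y\<bar> \<le> L1 * dist x y" using a(1) unfolding bounded_lip_def by blast
  obtain L2 where L2: "\<forall>x y. \<bar>\<psi> x - \<psi> y\<bar> \<le> L2 * dist x y" using a(2) unfolding bounded_lip_def by blast
  have "bounded (range (\<lambda>x. \<phi> x + \<psi> x))" unfolding bounded_iff
    using B1 B2 by (intro exI[of _ "B1 + B2"]) (auto intro: order.trans[OF abs_triangle_ineq] add_mono)
  moreover have "\<forall>x y. \<bar>(\<phi> x + \<psi> x) - (\<phi> y + \<psi> y)\<bar> \<le> (L1 + L2) * dist x y"
  proof (intro allI)
    fix x y
    have "\<bar>(\<phi> x + \<psi> x) - (\<phi> y + \<psi> y)\<bar> \<le> \<bar>\<phi> x - \<phi> y\<bar> + \<bar>\<psi> x - \<psi> y\<bar>" by linarith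
    also have "\<dots> \<le> L1 * dist x y + L2 * dist x y" using L1 L2 by (meson add_mono)
    finally show "\<bar>(\<phi> x + \<psi> x) - (\<phi> y + \<psi> y)\<bar> \<le> (L1 + L2) * dist x y" by (simp add: distrib_right)
  qed
  ultimately show ?thesis unfolding bounded_lip_def by blast
qed

lemma bl_scale: "bounded_lip \<phi> \<Longrightarrow> bounded_lip (\<lambda>x. c * \<phi> x)"
proof -
  assume a: "bounded_lip \<phi>"
  obtain B1 where B1: "\<forall>x. \<bar>\<phi> x\<bar> \<le> B1" using a(1) by (rule bl_bound)
  obtain L1 where L1: "\<forall>x y. \<bar>\<phi> x - \<phi> y\<bar> \<le> L1 * dist x y" using a(1) unfolding bounded_lip_def by blast
  have "bounded (range (\<lambda>x. c * \<phi> x))" unfolding bounded_iff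
    using B1 by (intro exI[of _ "\<bar>c\<bar> * B1"]) (auto simp: abs_mult intro: mult_left_mono)
  moreover have "\<forall>x y. \<bar>c * \<phi> x - c * \<phi> y\<bar> \<le> (\<bar>c\<bar> * L1) * dist x y"
  proof (intro allI)
    fix x y
    have "\<bar>c * \<phi> x - c * \<phi> y\<bar> = \<bar>c\<bar> * \<bar>\<phi> x - \<phi> y\<bar>" by (simp add: abs_mult right_diff_distrib[symmetric])
    also have "\<dots> \<le> \<bar>c\<bar> * (L1 * dist x y)" using L1 by (intro mult_left_mono) auto
    finally show "\<bar>c * \<phi> x - c * \<phi> y\<bar> \<le> (\<bar>c\<bar> * L1) * dist x y" by (simp add: mult_ac)
  qed
  ultimately show ?thesis unfolding bounded_lip_def by blast
qed

lemma bl_abs: "bounded_lip \<phi> \<Longrightarrow> bounded_lip (\<lambda>x. \<bar>\<phi> x\<bar>)"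
proof -
  assume a: "bounded_lip \<phi>"
  obtain B1 where B1: "\<forall>x. \<bar>\<phi> x\<bar> \<le> B1" using a(1) by (rule bl_bound)
  obtain L1 where L1: "\<forall>x y. \<bar>\<phi> x - \<phi> y\<bar> \<le> L1 * dist x y" using a(1) unfolding bounded_lip_def by blast
  have "bounded (range (\<lambda>x. \<bar>\<phi> x\<bar>))" unfolding bounded_iff
    using B1 by (intro exI[of _ "B1"]) auto
  moreover have "\<forall>x y. \<bar>\<bar>\<phi> x\<bar> - \<bar>\<phi> y\<bar>\<bar> \<le> L1 * dist x y"
    using L1 by (meson abs_triangle_ineq3 order.trans)
  ultimately show ?thesis unfolding bounded_lip_def by blast
qed

lemma bl_const: "bounded_lip (\<lambda>x. c)"
  unfolding bounded_lip_def by (auto intro: exI[of _ 0])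

lemma sup_mult_nonneg:
  fixes f :: "nat \<Rightarrow> real"
  assumes "bdd_above (f ` A)" "A \<noteq> {}" "c \<ge> 0"
  shows "(SUP n\<in>A. c * f n) = c * (SUP n\<in>A. f n)"
proof (cases "c = 0")
  case True then show ?thesis using assms by simp
next
  case False
  then have c: "c > 0" using assms by simp
  have bd: "bdd_above ((\<lambda>n. c * f n) ` A)"
  proof -
    obtain K where "\<forall>n\<in>A. f n \<le> K" using assms(1) by (auto simp: bdd_above_def)
    then show ?thesis using c by (intro bdd_aboveI2[of _ _ "c * K"]) auto
  qed
  show ?thesis
  proof (rule antisym)
    show "(SUP n\<in>A. c * f n) \<le> c * (SUP n\<in>A. f n)"
      using assms c by (intro cSUP_least) (auto intro: mult_left_mono cSUP_upper)
    have "(SUP n\<in>A. f n) \<le> (SUP n\<in>A. c * f n) / c"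
    proof (rule cSUP_least[OF assms(2)])
      fix n assume "n \<in> A"
      then have "c * f n \<le> (SUP n\<in>A. c * f n)" using bd by (intro cSUP_upper)
      then show "f n \<le> (SUP n\<in>A. c * f n) / c" using c by (simp add: field_simps)
    qed
    then show "c * (SUP n\<in>A. f n) \<le> (SUP n\<in>A. c * f n)" using c by (simp add: field_simps)
  qed
qed


theorem lemma4p2:
  fixes H :: "('w \<Rightarrow> real) set" and E :: "('w \<Rightarrow> real) \<Rightarrow> real"
    and Z :: "nat \<Rightarrow> 'w \<Rightarrow> real^'d" and \<alpha> \<delta> :: real
  assumes "0 < \<alpha>" and "\<alpha> \<le> 1"
    and "sublinear_expectation H E"
    and "random_seq H Z"
    and "iid_seq E Z"
    and "0 < \<delta>" and "\<delta> < \<alpha>"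
    and "\<exists>M. \<forall>n\<ge>1. \<forall>Y\<in>H. (\<forall>w. Y w \<le> norm (scaled_sum \<alpha> Z n w) powr \<delta>) \<longrightarrow> E Y \<le> M"
  shows "sublinear_expectation {\<phi>. bounded_lip \<phi>}
           (\<lambda>\<phi>::real^'d \<Rightarrow> real. SUP n\<in>{1::nat..}. E (\<lambda>w. \<phi> (scaled_sum \<alpha> Z n w)))
       \<and> tight (\<lambda>\<phi>::real^'d \<Rightarrow> real. SUP n\<in>{1::nat..}. E (\<lambda>w. \<phi> (scaled_sum \<alpha> Z n w)))"
proof -
  note SE = assms(3)[unfolded sublinear_expectation_def]
  have Hc: "\<And>c. (\<lambda>_. c) \<in> H" using SE by blast
  have Emono: "\<And>X Y. X \<in> H \<Longrightarrow> Y \<in> H \<Longrightarrow> (\<forall>w. X w \<le> Y w) \<Longrightarrow> E X \<le> E Y" using SE by blast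
  have Ec: "\<And>c. E (\<lambda>_. c) = c" using SE by blast
  have Eadd: "\<And>X Y. X \<in> H \<Longrightarrow> Y \<in> H \<Longrightarrow> E (\<lambda>w. X w + Y w) \<le> E X + E Y" using SE by blast
  have Ehom: "\<And>X c. X \<in> H \<Longrightarrow> c \<ge> 0 \<Longrightarrow> E (\<lambda>w. c * X w) = c * E X" using SE by blast
  define S where "S = scaled_sum \<alpha> Z"
  define F where "F = (\<lambda>\<phi>::real^'d \<Rightarrow> real. SUP n\<in>{1::nat..}. E (\<lambda>w. \<phi> (S n w)))"
  have inH: "\<And>\<phi> n. bounded_lip \<phi> \<Longrightarrow> (\<lambda>w. \<phi> (S n w)) \<in> H"
    unfolding S_def using comp_in_H[OF assms(4)] by blast
  have bdd: "bdd_above ((\<lambda>n. E (\<lambda>w. \<phi> (S n w))) ` A)" if bl0: "bounded_lip \<phi>" for \<phi> and A :: "nat set"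
  proof -
    obtain B where B: "\<forall>x. \<bar>\<phi> x\<bar> \<le> B" using bl0 by (rule bl_bound)
    have "E (\<lambda>w. \<phi> (S n w)) \<le> B" for n
    proof -
      have "E (\<lambda>w. \<phi> (S n w)) \<le> E (\<lambda>_. B)"
        using B by (intro Emono inH bl0 Hc) (auto simp: abs_le_iff)
      then show ?thesis by (simp add: Ec)
    qed
    then show ?thesis by (intro bdd_aboveI2[of _ _ B]) auto
  qed
  have ne: "{1::nat..} \<noteq> {}" by auto
  have part1: "sublinear_expectation {\<phi>. bounded_lip \<phi>} F"
    unfolding sublinear_expectation_def
  proof (intro conjI ballI allI impI; simp?)
    show "\<And>c. bounded_lip (\<lambda>_. c)" by (rule bl_const)
    show "\<And>X Y. bounded_lip X \<Longrightarrow> bounded_lip Y \<Longrightarrow> bounded_lip (\<lambda>w. X w + Y w)" by (rule bl_add)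
    show "\<And>X c. bounded_lip X \<Longrightarrow> bounded_lip (\<lambda>w. c * X w)" by (rule bl_scale)
    show "\<And>X. bounded_lip X \<Longrightarrow> bounded_lip (\<lambda>w. \<bar>X w\<bar>)" by (rule bl_abs)
    show "F X \<le> F Y" if "bounded_lip X" "bounded_lip Y" "\<forall>w. X w \<le> Y w" for X Y
      unfolding F_def
    proof (rule cSUP_mono[OF ne bdd[OF that(2)]])
      fix n :: nat assume "n \<in> {1..}"
      then show "\<exists>m\<in>{1..}. E (\<lambda>w. X (S n w)) \<le> E (\<lambda>w. Y (S m w))"
        using that by (intro bexI[of _ n] Emono inH) auto
    qed
    show "F (\<lambda>_. c) = c" for c unfolding F_def by (simp add: Ec)
    show "F (\<lambda>w. X w + Y w) \<le> F X + F Y" if "bounded_lip X" "bounded_lip Y" for X Y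
      unfolding F_def
    proof (rule cSUP_least[OF ne])
      fix n :: nat assume n: "n \<in> {1..}"
      have "E (\<lambda>w. X (S n w) + Y (S n w)) \<le> E (\<lambda>w. X (S n w)) + E (\<lambda>w. Y (S n w))"
        using that by (intro Eadd inH)
      also have "\<dots> \<le> (SUP n\<in>{1..}. E (\<lambda>w. X (S n w))) + (SUP n\<in>{1..}. E (\<lambda>w. Y (S n w)))"
        using n that by (intro add_mono cSUP_upper bdd)
      finally show "E (\<lambda>w. X (S n w) + Y (S n w)) \<le> (SUP n\<in>{1..}. E (\<lambda>w. X (S n w))) + (SUP n\<in>{1..}. E (\<lambda>w. Y (S n w)))" .
    qed
    show "F (\<lambda>w. c * X w) = c * F X" if "bounded_lip X" "0 \<le> c" for X c
    proof -
      have "F (\<lambda>w. c * X w) = (SUP n\<in>{1..}. c * E (\<lambda>w. X (S n w)))"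
        unfolding F_def using that by (intro SUP_cong refl) (auto intro: Ehom inH)
      also have "\<dots> = c * F X" unfolding F_def
        by (rule sup_mult_nonneg[OF bdd[OF that(1)] ne that(2)])
      finally show ?thesis .
    qed
  qed
  have part2: "tight F"
    unfolding tight_def
  proof (intro allI impI)
    fix \<epsilon> :: real assume e: "\<epsilon> > 0"
    obtain M0 where M0: "\<forall>n\<ge>1. \<forall>Y\<in>H. (\<forall>w. Y w \<le> norm (S n w) powr \<delta>) \<longrightarrow> E Y \<le> M0"
      using assms(8) unfolding S_def by blast
    define M where "M = max M0 1"
    have Mpos: "M > 0" unfolding M_def by simp
    define a where "a = (2 * M / \<epsilon>) powr (1 / \<delta>)"
    have apos: "a > 0" unfolding a_def using Mpos e by simp
    define K where "K = a powr \<delta>"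
    have K: "K = 2 * M / \<epsilon>" unfolding K_def a_def using Mpos e assms(6)
      by (simp add: powr_powr)
    have Kpos: "K > 0" using K Mpos e by simp
    define \<phi> where "\<phi> = (\<lambda>x::real^'d. min 1 (max 0 (norm x - a)))"
    have bl: "bounded_lip \<phi>" unfolding bounded_lip_def
    proof
      show "bounded (range \<phi>)" unfolding bounded_iff \<phi>_def by (intro exI[of _ 1]) auto
      show "\<exists>L. \<forall>x y. \<bar>\<phi> x - \<phi> y\<bar> \<le> L * dist x y"
      proof (intro exI[of _ 1] allI)
        fix x y :: "real^'d"
        have "\<bar>norm x - norm y\<bar> \<le> dist x y" by (simp add: dist_norm norm_triangle_ineq3)
        then show "\<bar>\<phi> x - \<phi> y\<bar> \<le> 1 * dist x y" unfolding \<phi>_def by (auto simp: min_def max_def abs_if split: if_splits)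
      qed
    qed
    have ptw: "K * \<phi> x \<le> norm x powr \<delta>" for x :: "real^'d"
    proof (cases "norm x \<le> a")
      case True then show ?thesis unfolding \<phi>_def by simp
    next
      case False
      then have "K \<le> norm x powr \<delta>" unfolding K_def using apos assms(6)
        by (intro powr_mono2) auto
      moreover have "\<phi> x \<le> 1" "\<phi> x \<ge> 0" unfolding \<phi>_def by auto
      ultimately show ?thesis using Kpos by (smt (verit) mult_left_le)
    qed
    have "F \<phi> \<le> \<epsilon> / 2" unfolding F_def
    proof (rule cSUP_least[OF ne])
      fix n :: nat assume n: "n \<in> {1..}"
      have "E (\<lambda>w. K * \<phi> (S n w)) \<le> M0"
        using M0 n inH[OF bl] ptw SE by auto
      then have "K * E (\<lambda>w. \<phi> (S n w)) \<le> M"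
        using Ehom[OF inH[OF bl], of K n] Kpos unfolding M_def by simp
      then have "E (\<lambda>w. \<phi> (S n w)) \<le> M / K" using Kpos by (simp add: field_simps)
      also have "M / K = \<epsilon> / 2" using K Mpos e Kpos by (simp add: field_simps)
      finally show "E (\<lambda>w. \<phi> (S n w)) \<le> \<epsilon> / 2" .
    qed
    then have "F \<phi> < \<epsilon>" using e by simp
    moreover have "\<forall>x. (if norm x \<ge> a + 1 then 1 else 0) \<le> \<phi> x" unfolding \<phi>_def by auto
    ultimately show "\<exists>N>0. \<exists>\<phi>. bounded_lip \<phi> \<and> (\<forall>x. (if N \<le> norm x then 1 else 0) \<le> \<phi> x) \<and> F \<phi> < \<epsilon>"
      using bl apos by (intro exI[of _ "a + 1"] conjI exI[of _ \<phi>]) auto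
  qed
  show ?thesis using part1 part2 unfolding F_def S_def by simp
qed

end
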